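(* There are constants $c,C>0$ such that for all sufficiently large $n$ and all $p,q\in(0,1)$ with $\hat p=\frac{p}{p+q}\ge c\frac{\log n}{n}$, with probability at least $1-1/n$ the flooding time of the stationary edge-MEG $\mathcal{M}(n,p,q)$ is at least $C\,\frac{\log n}{\log(n\hat p)}$.
   Context: The edge-MEG $\mathcal{M}(n,p,q)=\{G_t\}$ on node set $[n]$: for each pair $e\in\binom{[n]}{2}$ there is an independent two-state Markov chain $X_t(e)\in\{0,1\}$ with $\Pr[X_{t+1}(e)=1\mid X_t(e)=0]=p$ and $\Pr[X_{t+1}(e)=0\mid X_t(e)=1]=q$; $G_t=([n],\{e:X_t(e)=1\})$. It is stationary when $G_0$ is drawn from the stationary distribution, which is the Erdős–Rényi graph $G_{n,\hat p}$, $\hat p=p/(p+q)$ (so every $G_t$ has law $G_{n,\hat p}$). Flooding from source $s$: $I_0=\{s\}$, $I_{t+1}=I_t\cup N_t(I_t)$ where $N_t(I)$ is the set of nodes outside $I$ adjacent in $G_t$ to some node of $I$; $T(s)$ is the first $t$ with $I_t=[n]$; the flooding time is $\max_s T(s)$. Logarithms are natural. *)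

theory Defs
  imports "HOL-Probability.Probability"
begin

(* Randomness source: independent Bernoulli coins indexed by (edge, time, kind).
   kind 0: initial state of the edge, Bernoulli(p/(p+q))  (stationary start);
   kind 1: at time t, used if edge absent: becomes present w.p. p;
   kind >= 2: at time t, used if edge present: stays present w.p. 1-q. *)
definition meg_space :: "real \<Rightarrow> real \<Rightarrow> ((nat \<times> nat) \<times> nat \<times> nat \<Rightarrow> bool) measure" where
  "meg_space p q = PiM UNIV (\<lambda>(e, t, k). measure_pmf (bernoulli_pmf
      (if k = 0 then p / (p + q) else if k = 1 then p else 1 - q)))"

fun meg_edge :: "((nat \<times> nat) \<times> nat \<times> nat \<Rightarrow> bool) \<Rightarrow> nat \<times> nat \<Rightarrow> nat \<Rightarrow> bool" where
  "meg_edge \<omega> e 0 = \<omega> (e, 0, 0)"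
| "meg_edge \<omega> e (Suc t) = (if meg_edge \<omega> e t then \<omega> (e, t, 2) else \<omega> (e, t, 1))"

(* adjacency in G_t; the edge {u,v} is indexed by (min u v, max u v) *)
definition meg_adj :: "((nat \<times> nat) \<times> nat \<times> nat \<Rightarrow> bool) \<Rightarrow> nat \<Rightarrow> nat \<Rightarrow> nat \<Rightarrow> bool" where
  "meg_adj \<omega> t u v = (u \<noteq> v \<and> meg_edge \<omega> (min u v, max u v) t)"

fun flood_set :: "nat \<Rightarrow> (nat \<Rightarrow> nat \<Rightarrow> nat \<Rightarrow> bool) \<Rightarrow> nat \<Rightarrow> nat \<Rightarrow> nat set" where
  "flood_set n G s 0 = {s}"
| "flood_set n G s (Suc t) = flood_set n G s t \<union>
     {v. v < n \<and> v \<notin> flood_set n G s t \<and> (\<exists>u \<in> flood_set n G s t. G t u v)}"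

definition flood_completion :: "nat \<Rightarrow> (nat \<Rightarrow> nat \<Rightarrow> nat \<Rightarrow> bool) \<Rightarrow> nat \<Rightarrow> enat" where
  "flood_completion n G s =
     (if \<exists>t. flood_set n G s t = {..<n} then enat (LEAST t. flood_set n G s t = {..<n}) else \<infinity>)"

definition flooding_time :: "nat \<Rightarrow> (nat \<Rightarrow> nat \<Rightarrow> nat \<Rightarrow> bool) \<Rightarrow> enat" where
  "flooding_time n G = Max (flood_completion n G ` {..<n})"

end

theory Submission
  imports Defs
begin


definition bern :: "real \<Rightarrow> real \<Rightarrow> (nat \<times> nat) \<times> nat \<times> nat \<Rightarrow> bool measure" where
  "bern p q = (\<lambda>(e, t, k). measure_pmf (bernoulli_pmf
      (if k = 0 then p / (p + q) else if k = 1 then p else 1 - q)))"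

lemma meg_space_bern: "meg_space p q = PiM UNIV (bern p q)"
  unfolding meg_space_def bern_def by simp

lemma prob_space_meg: "prob_space (meg_space p q)"
  unfolding meg_space_bern
  by (rule prob_space_PiM) (auto simp: bern_def prob_space_measure_pmf split: prod.splits)

lemma sets_bern[simp]: "sets (bern p q i) = UNIV"
  by (auto simp: bern_def split: prod.splits)

lemma space_bern[simp]: "space (bern p q i) = UNIV"
  by (auto simp: bern_def split: prod.splits)

lemma pred_comp: "i \<in> K \<Longrightarrow> Measurable.pred (PiM K (bern p q)) (\<lambda>x. x i)"
proof -
  assume i: "i \<in> K"
  have "(\<lambda>x. x i) \<in> measurable (PiM K (bern p q)) (bern p q i)"
    by (rule measurable_component_singleton) (rule i)
  moreover have "measurable (PiM K (bern p q)) (bern p q i) = measurable (PiM K (bern p q)) (count_space UNIV)"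
    by (rule measurable_cong_sets) auto
  ultimately show ?thesis by simp
qed

lemma indep_coords:
  "prob_space.indep_vars (meg_space p q) (bern p q) (\<lambda>i \<omega>. \<omega> i) UNIV"
proof -
  interpret P: prob_space "meg_space p q" by (rule prob_space_meg)
  interpret PP: product_prob_space "bern p q" UNIV
    by unfold_locales (auto simp: bern_def prob_space_measure_pmf split: prod.splits)
  show ?thesis
  proof (subst P.indep_vars_iff_distr_eq_PiM)
    show "(\<lambda>\<omega>. \<omega> i) \<in> measurable (meg_space p q) (bern p q i)" for i
      unfolding meg_space_bern by (rule measurable_component_singleton) auto
    have "distr (meg_space p q) (Pi\<^sub>M UNIV (bern p q)) (\<lambda>x. \<lambda>i\<in>UNIV. x i)
       = distr (meg_space p q) (Pi\<^sub>M UNIV (bern p q)) (\<lambda>x. x)"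
      by (rule distr_cong) auto
    also have "\<dots> = meg_space p q" unfolding meg_space_bern by (rule distr_id)
    also have "\<dots> = (\<Pi>\<^sub>M i\<in>UNIV. distr (meg_space p q) (bern p q i) (\<lambda>\<omega>. \<omega> i))"
      unfolding meg_space_bern by (intro PiM_cong refl PP.PiM_component[symmetric]) auto
    finally show "distr (meg_space p q) (Pi\<^sub>M UNIV (bern p q)) (\<lambda>x. \<lambda>i\<in>UNIV. x i) =
      (\<Pi>\<^sub>M i\<in>UNIV. distr (meg_space p q) (bern p q i) (\<lambda>\<omega>. \<omega> i))" .
  qed simp
qed

lemma meg_edge_restrict:
  assumes "\<And>t k. t < T \<Longrightarrow> (e, t, k) \<in> A" "(e,0,0) \<in> A" "t \<le> T"
  shows "meg_edge (restrict \<omega> A) e t = meg_edge \<omega> e t"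
  using assms(3) by (induction t) (auto simp: assms(1,2))

lemma pred_meg_edge:
  assumes "\<And>t k. t < T \<Longrightarrow> (e, t, k) \<in> A" "(e,0,0) \<in> A" "t \<le> T"
  shows "Measurable.pred (PiM A (bern p q)) (\<lambda>x. meg_edge x e t)"
  using assms(3)
proof (induction t)
  case 0 then show ?case using pred_comp[OF assms(2)] by simp
next
  case (Suc t)
  have a: "Measurable.pred (PiM A (bern p q)) (\<lambda>x. x (e,t,k))" for k
    using Suc assms by (intro pred_comp) auto
  have b: "Measurable.pred (PiM A (bern p q)) (\<lambda>x. meg_edge x e t)" using Suc by auto
  note [measurable] = a[of 1] a[of 2] b
  show ?case unfolding meg_edge.simps if_bool_eq_conj 
    apply (rule pred_intros_logic(3))
    apply (rule pred_intros_logic(4))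
    apply (rule b)
    apply (rule a)
    apply (rule pred_intros_logic(4))
    apply (rule pred_intros_logic(2))
    apply (rule b)
    apply (rule a)
    done
qed




context
  fixes p q :: real
  assumes pq: "0 < p" "p < 1" "0 < q" "q < 1"
begin

interpretation P: prob_space "meg_space p q" by (rule prob_space_meg)

definition blk :: "nat \<times> nat \<Rightarrow> ((nat \<times> nat) \<times> nat \<times> nat) set" where
  "blk e = {e} \<times> UNIV"

lemma indep_edges:
  "P.indep_vars (\<lambda>_. count_space UNIV) (\<lambda>e \<omega>. meg_edge \<omega> e t) UNIV"
proof -
  have "P.indep_vars (\<lambda>e. PiM (blk e) (bern p q)) (\<lambda>e \<omega>. restrict (\<lambda>i. \<omega> i) (blk e)) UNIV"
    by (rule P.indep_vars_restrict[OF indep_coords]) (auto simp: blk_def disjoint_family_on_def)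
  then have "P.indep_vars (\<lambda>_. count_space UNIV) (\<lambda>e \<omega>. meg_edge (restrict (\<lambda>i. \<omega> i) (blk e)) e t) UNIV"
    by (rule P.indep_vars_compose2[where Y="\<lambda>e x. meg_edge x e t"])
       (rule pred_meg_edge[where T=t], auto simp: blk_def)
  moreover have "meg_edge (restrict (\<lambda>i. \<omega> i) (blk e)) e t = meg_edge \<omega> e t" for \<omega> e
    by (rule meg_edge_restrict[where T=t]) (auto simp: blk_def)
  ultimately show ?thesis by simp
qed

lemma prob_coord: "P.prob {\<omega> \<in> space (meg_space p q). \<omega> i} =
   (case i of (e, t, k) \<Rightarrow> (if k = 0 then p / (p + q) else if k = 1 then p else 1 - q))"
proof -
  interpret PP: product_prob_space "bern p q" UNIV
    by unfold_locales (auto simp: bern_def prob_space_measure_pmf split: prod.splits)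
  have "emeasure (meg_space p q) {\<omega> \<in> space (meg_space p q). \<omega> i \<in> {True}} = emeasure (bern p q i) {True}"
    unfolding meg_space_bern by (rule PP.emeasure_PiM_Collect_single) auto
  moreover have "\<dots> = ennreal (case i of (e, t, k) \<Rightarrow> (if k = 0 then p / (p + q) else if k = 1 then p else 1 - q))"
    using pq by (auto simp: bern_def emeasure_pmf_single split: prod.splits)
  ultimately show ?thesis using pq
    by (simp add: P.emeasure_eq_measure split: prod.splits)
qed

lemma meas_edge: "{\<omega> \<in> space (meg_space p q). meg_edge \<omega> e t} \<in> P.events"
proof -
  have "Measurable.pred (meg_space p q) (\<lambda>x. meg_edge x e t)"
    unfolding meg_space_bern by (rule pred_meg_edge[where T=t]) auto
  then show ?thesis by (rule predE)
qed

lemma meas_coord: "{\<omega> \<in> space (meg_space p q). \<omega> i} \<in> P.events"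
proof -
  have "Measurable.pred (meg_space p q) (\<lambda>x. x i)"
    unfolding meg_space_bern by (rule pred_comp) auto
  then show ?thesis by (rule predE)
qed

lemma indep_Xc:
  assumes "k \<noteq> 0"
  shows "P.indep_var (count_space UNIV) (\<lambda>\<omega>. meg_edge \<omega> e t) (count_space UNIV) (\<lambda>\<omega>. \<omega> (e,t,k))"
proof -
  define A where "A = {i :: (nat \<times> nat) \<times> nat \<times> nat. fst (snd i) < t \<or> snd (snd i) = 0}"
  define B where "B = {i :: (nat \<times> nat) \<times> nat \<times> nat. fst (snd i) = t \<and> snd (snd i) \<noteq> 0}"
  have I0: "P.indep_var (PiM A (bern p q)) (\<lambda>\<omega>. restrict (\<lambda>i. \<omega> i) A) (PiM B (bern p q)) (\<lambda>\<omega>. restrict (\<lambda>i. \<omega> i) B)"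
    by (rule P.indep_var_restrict[OF indep_coords]) (auto simp: A_def B_def)
  have m1: "Measurable.pred (PiM A (bern p q)) (\<lambda>x. meg_edge x e t)"
    by (rule pred_meg_edge[where T=t]) (auto simp: A_def)
  have m2: "Measurable.pred (PiM B (bern p q)) (\<lambda>x. x (e,t,k))"
    using assms by (intro pred_comp) (auto simp: B_def gr0I)
  have I: "P.indep_var (count_space UNIV) ((\<lambda>x. meg_edge x e t) \<circ> (\<lambda>\<omega>. restrict (\<lambda>i. \<omega> i) A))
      (count_space UNIV) ((\<lambda>x. x (e,t,k)) \<circ> (\<lambda>\<omega>. restrict (\<lambda>i. \<omega> i) B))"
    by (rule P.indep_var_compose[OF I0 m1 m2])
  have e1: "(\<lambda>x. meg_edge x e t) \<circ> (\<lambda>\<omega>. restrict (\<lambda>i. \<omega> i) A) = (\<lambda>\<omega>. meg_edge \<omega> e t)"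
    by (rule ext, simp, rule meg_edge_restrict[where T=t]) (auto simp: A_def)
  have e2: "(\<lambda>x. x (e,t,k)) \<circ> (\<lambda>\<omega>. restrict (\<lambda>i. \<omega> i) B) = (\<lambda>\<omega>. \<omega> (e,t,k))"
    using assms by (auto simp: B_def gr0I)
  show ?thesis using I unfolding e1 e2 .
qed

lemma prob_joint:
  assumes "k \<noteq> 0"
  shows "P.prob {\<omega> \<in> space (meg_space p q). meg_edge \<omega> e t = b \<and> \<omega> (e,t,k)}
     = P.prob {\<omega> \<in> space (meg_space p q). meg_edge \<omega> e t = b} * P.prob {\<omega> \<in> space (meg_space p q). \<omega> (e,t,k)}"
  using P.prob_indep_random_variable[OF indep_Xc[OF assms, of e t], of "{b}" "{True}"] by simp

lemma marginal: "P.prob {\<omega> \<in> space (meg_space p q). meg_edge \<omega> e t} = p / (p + q)"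
proof (induction t)
  case 0
  then show ?case using prob_coord[of "(e,0,0)"] by simp
next
  case (Suc t)
  let ?S = "space (meg_space p q)"
  let ?X = "{\<omega> \<in> ?S. meg_edge \<omega> e t}"
  have eq: "{\<omega> \<in> ?S. meg_edge \<omega> e (Suc t)} =
     {\<omega> \<in> ?S. meg_edge \<omega> e t = True \<and> \<omega> (e,t,2)} \<union> {\<omega> \<in> ?S. meg_edge \<omega> e t = False \<and> \<omega> (e,t,1)}"
    by auto
  have m1: "{\<omega> \<in> ?S. meg_edge \<omega> e t = True \<and> \<omega> (e,t,2)} \<in> P.events"
    using meas_edge[of e t] meas_coord[of "(e,t,2)"] by (simp add: Collect_conj_eq[symmetric] Int_def)
  have m2: "{\<omega> \<in> ?S. meg_edge \<omega> e t = False \<and> \<omega> (e,t,1)} \<in> P.events"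
  proof -
    have "{\<omega> \<in> ?S. meg_edge \<omega> e t = False \<and> \<omega> (e,t,1)} = (?S - ?X) \<inter> {\<omega> \<in> ?S. \<omega> (e,t,1)}" by auto
    then show ?thesis using meas_edge[of e t] meas_coord[of "(e,t,1)"] by auto
  qed
  have nx: "{\<omega> \<in> ?S. meg_edge \<omega> e t = False} = ?S - ?X" by auto
  have "P.prob {\<omega> \<in> ?S. meg_edge \<omega> e (Suc t)} =
     P.prob {\<omega> \<in> ?S. meg_edge \<omega> e t = True \<and> \<omega> (e,t,2)} + P.prob {\<omega> \<in> ?S. meg_edge \<omega> e t = False \<and> \<omega> (e,t,1)}"
    unfolding eq by (rule P.finite_measure_Union[OF m1 m2]) auto
  also have "\<dots> = p / (p + q) * (1 - q) + (1 - p / (p + q)) * p"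
    using prob_joint[of 2 e t True] prob_joint[of 1 e t False] Suc prob_coord[of "(e,t,2)"] prob_coord[of "(e,t,1)"]
      P.prob_compl[OF meas_edge[of e t]] nx by simp
  also have "\<dots> = p / (p + q)"
  proof -
    have d: "1 - p/(p+q) = q/(p+q)" using pq by (simp add: field_simps)
    have "p / (p + q) * (1 - q) + q / (p + q) * p = (p * (1 - q) + q * p) / (p + q)"
      by (simp add: add_divide_distrib)
    also have "p * (1 - q) + q * p = p" by (simp add: algebra_simps)
    finally show ?thesis by (simp add: d)
  qed
  finally show ?case .
qed

end



lemma flood_sub: "s < n \<Longrightarrow> flood_set n G s t \<subseteq> {..<n}"
  by (induction t) auto

lemma flood_mono1: "flood_set n G s t \<subseteq> flood_set n G s (Suc t)"
  by auto

lemma flood_mono: "t \<le> t' \<Longrightarrow> flood_set n G s t \<subseteq> flood_set n G s t'"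
  by (induction t' rule: dec_induct) (use flood_mono1 in blast)+

lemma flood_finite: "finite (flood_set n G s t)"
  by (induction t) auto

lemma flood_growth:
  assumes s: "s < n" and deg: "\<And>\<tau> u. \<tau> < m \<Longrightarrow> u < n \<Longrightarrow> card {v. v < n \<and> G \<tau> u v} \<le> D"
  shows "card (flood_set n G s m) \<le> (D + 1) ^ m"
  using deg
proof (induction m)
  case 0 then show ?case by simp
next
  case (Suc m)
  let ?I = "flood_set n G s m"
  have IH: "card ?I \<le> (D+1)^m" using Suc by auto
  have sub: "flood_set n G s (Suc m) \<subseteq> ?I \<union> (\<Union>u\<in>?I. {v. v < n \<and> G m u v})"
    by auto
  have "card (flood_set n G s (Suc m)) \<le> card (?I \<union> (\<Union>u\<in>?I. {v. v < n \<and> G m u v}))"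
    by (rule card_mono[OF _ sub]) (auto simp: flood_finite)
  also have "\<dots> \<le> card ?I + card (\<Union>u\<in>?I. {v. v < n \<and> G m u v})"
    by (rule card_Un_le)
  also have "card (\<Union>u\<in>?I. {v. v < n \<and> G m u v}) \<le> (\<Sum>u\<in>?I. card {v. v < n \<and> G m u v})"
    by (rule card_UN_le) (simp add: flood_finite)
  also have "\<dots> \<le> (\<Sum>u\<in>?I. D)"
    by (rule sum_mono) (use Suc.prems flood_sub[OF s, of G m] in auto)
  also have "\<dots> = card ?I * D" by simp
  finally have "card (flood_set n G s (Suc m)) \<le> card ?I * (D + 1)" by (simp add: algebra_simps)
  also have "\<dots> \<le> (D+1)^m * (D+1)" using IH by (rule mult_right_mono) simp
  finally show ?case by (simp add: algebra_simps)
qed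

lemma fc_ge_iff:
  assumes s: "s < n"
  shows "enat (Suc m) \<le> flood_completion n G s \<longleftrightarrow> flood_set n G s m \<noteq> {..<n}"
proof
  assume h: "enat (Suc m) \<le> flood_completion n G s"
  show "flood_set n G s m \<noteq> {..<n}"
  proof
    assume eq: "flood_set n G s m = {..<n}"
    then have ex: "\<exists>t. flood_set n G s t = {..<n}" by blast
    have "(LEAST t. flood_set n G s t = {..<n}) \<le> m" by (rule Least_le) (rule eq)
    then show False using h ex by (simp add: flood_completion_def)
  qed
next
  assume ne: "flood_set n G s m \<noteq> {..<n}"
  show "enat (Suc m) \<le> flood_completion n G s"
  proof (cases "\<exists>t. flood_set n G s t = {..<n}")
    case True
    let ?t = "LEAST t. flood_set n G s t = {..<n}"
    have t: "flood_set n G s ?t = {..<n}" using True by (rule LeastI_ex)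
    have "m < ?t"
    proof (rule ccontr)
      assume "\<not> m < ?t"
      then have "flood_set n G s ?t \<subseteq> flood_set n G s m" by (intro flood_mono) simp
      then have "flood_set n G s m = {..<n}" using t flood_sub[OF s, of G m] by auto
      then show False using ne by simp
    qed
    then show ?thesis using True by (simp add: flood_completion_def)
  next
    case False
    then show ?thesis by (simp add: flood_completion_def)
  qed
qed

lemma ft_ge_iff:
  assumes n: "0 < n"
  shows "enat (Suc m) \<le> flooding_time n G \<longleftrightarrow> (\<exists>s<n. \<exists>v<n. v \<notin> flood_set n G s m)"
proof -
  have "enat (Suc m) \<le> flooding_time n G \<longleftrightarrow> (\<exists>s\<in>{..<n}. enat (Suc m) \<le> flood_completion n G s)"
    unfolding flooding_time_def using n by (subst Max_ge_iff) auto
  also have "\<dots> \<longleftrightarrow> (\<exists>s<n. flood_set n G s m \<noteq> {..<n})"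
    using fc_ge_iff by auto
  also have "\<dots> \<longleftrightarrow> (\<exists>s<n. \<exists>v<n. v \<notin> flood_set n G s m)"
    using flood_sub[of _ n G m] by blast
  finally show ?thesis .
qed

lemma ereal_enat_iff:
  fixes B :: real
  assumes "0 < B"
  shows "ereal B \<le> ereal_of_enat x \<longleftrightarrow> enat (Suc (nat \<lceil>B\<rceil> - 1)) \<le> x"
proof (cases x)
  case (enat f)
  have c: "Suc (nat \<lceil>B\<rceil> - 1) = nat \<lceil>B\<rceil>" using assms by linarith
  have "B \<le> real f \<longleftrightarrow> nat \<lceil>B\<rceil> \<le> f" using assms
    by (metis ceiling_le_iff nat_le_iff of_int_of_nat_eq)
  then show ?thesis using enat c by simp
next
  case infinity
  then show ?thesis by simp
qed




context
  fixes p q :: real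
  assumes pq: "0 < p" "p < 1" "0 < q" "q < 1"
begin

interpretation P: prob_space "meg_space p q" by (rule prob_space_meg)

lemma pred_edge': "Measurable.pred (meg_space p q) (\<lambda>\<omega>. meg_edge \<omega> e t)"
  unfolding meg_space_bern by (rule pred_meg_edge[where T=t]) auto

lemma pred_flood: "Measurable.pred (meg_space p q) (\<lambda>\<omega>. v \<in> flood_set n (meg_adj \<omega>) s m)"
proof (induction m arbitrary: v)
  case 0
  then show ?case by simp
next
  case (Suc m)
  note [measurable] = Suc.IH pred_edge'
  have eq: "(v \<in> flood_set n (meg_adj \<omega>) s (Suc m)) = (v \<in> flood_set n (meg_adj \<omega>) s m \<or>
     (v < n \<and> v \<notin> flood_set n (meg_adj \<omega>) s m \<and> (\<exists>u. u \<in> flood_set n (meg_adj \<omega>) s m \<and>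
        (u \<noteq> v \<and> meg_edge \<omega> (min u v, max u v) m))))" for \<omega>
    by (auto simp: meg_adj_def)
  show ?case by (simp only: eq) measurable
qed

lemma prob_all_edges:
  assumes "finite E"
  shows "P.prob {\<omega> \<in> space (meg_space p q). \<forall>e\<in>E. meg_edge \<omega> e t} = (p / (p + q)) ^ card E"
proof (cases "E = {}")
  case True
  then show ?thesis by (simp add: P.prob_space)
next
  case False
  let ?X = "\<lambda>e \<omega>. meg_edge \<omega> e t"
  have "P.prob (\<Inter>e\<in>E. ?X e -` {True} \<inter> space (meg_space p q)) = (\<Prod>e\<in>E. P.prob (?X e -` {True} \<inter> space (meg_space p q)))"
    by (rule P.indep_varsD[OF indep_edges[OF pq]]) (use False assms in auto)
  moreover have "(\<Inter>e\<in>E. ?X e -` {True} \<inter> space (meg_space p q)) = {\<omega> \<in> space (meg_space p q). \<forall>e\<in>E. meg_edge \<omega> e t}"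
    using False by auto
  moreover have "P.prob (?X e -` {True} \<inter> space (meg_space p q)) = p / (p + q)" for e
  proof -
    have "?X e -` {True} \<inter> space (meg_space p q) = {\<omega> \<in> space (meg_space p q). meg_edge \<omega> e t}" by auto
    then show ?thesis using marginal[OF pq] by simp
  qed
  ultimately show ?thesis by simp
qed

lemma prob_star:
  assumes "finite S" "u \<notin> S"
  shows "P.prob {\<omega> \<in> space (meg_space p q). \<forall>v\<in>S. meg_adj \<omega> t u v} = (p / (p + q)) ^ card S"
proof -
  let ?f = "\<lambda>v. (min u v, max u v)"
  have inj: "inj_on ?f S"
    using assms(2) by (auto simp: inj_on_def min_def max_def split: if_splits)
  have "{\<omega> \<in> space (meg_space p q). \<forall>v\<in>S. meg_adj \<omega> t u v} = {\<omega> \<in> space (meg_space p q). \<forall>e\<in>?f ` S. meg_edge \<omega> e t}"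
    using assms(2) by (auto simp: meg_adj_def)
  then show ?thesis using prob_all_edges[of "?f ` S" t] assms card_image[OF inj] by simp
qed

lemma meas_star: "{\<omega> \<in> space (meg_space p q). \<forall>v\<in>S. meg_adj \<omega> t u v} \<in> P.events"
proof -
  note [measurable] = pred_edge'
  have "Measurable.pred (meg_space p q) (\<lambda>\<omega>. \<forall>v. v \<in> S \<longrightarrow> meg_adj \<omega> t u v)"
    unfolding meg_adj_def by measurable
  then show ?thesis by (simp add: Ball_def pred_def)
qed

definition badset :: "nat \<Rightarrow> nat \<Rightarrow> nat \<Rightarrow> nat \<Rightarrow> ((nat \<times> nat) \<times> nat \<times> nat \<Rightarrow> bool) set" where
  "badset n k t u = (\<Union>S\<in>{S. S \<subseteq> {..<n} - {u} \<and> card S = k}. {\<omega> \<in> space (meg_space p q). \<forall>v\<in>S. meg_adj \<omega> t u v})"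

lemma badset_events: "badset n k t u \<in> P.events"
  unfolding badset_def by (intro sets.finite_UN meas_star) auto

lemma badset_prob: "P.prob (badset n k t u) \<le> real (n choose k) * (p / (p + q)) ^ k"
proof -
  let ?F = "{S. S \<subseteq> {..<n} - {u} \<and> card S = k}"
  have fin: "finite ?F" by (rule finite_subset[of _ "Pow {..<n}"]) auto
  have "P.prob (badset n k t u) \<le> (\<Sum>S\<in>?F. P.prob {\<omega> \<in> space (meg_space p q). \<forall>v\<in>S. meg_adj \<omega> t u v})"
    unfolding badset_def by (rule P.finite_measure_subadditive_finite[OF fin]) (auto intro: meas_star)
  also have "\<dots> = (\<Sum>S\<in>?F. (p / (p + q)) ^ k)"
    by (rule sum.cong) (auto intro!: prob_star dest: finite_subset)
  also have "\<dots> = real (card ?F) * (p / (p + q)) ^ k" by simp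
  also have "\<dots> \<le> real (n choose k) * (p / (p + q)) ^ k"
  proof -
    have "card ?F \<le> card {S. S \<subseteq> {..<n} \<and> card S = k}"
      by (rule card_mono) (auto intro: finite_subset[of _ "Pow {..<n}"])
    also have "\<dots> = n choose k" by (subst n_subsets) auto
    finally show ?thesis using pq by (intro mult_right_mono) auto
  qed
  finally show ?thesis .
qed

lemma not_bad:
  assumes "\<omega> \<notin> badset n k t u" "\<omega> \<in> space (meg_space p q)" "u < n"
  shows "card {v. v < n \<and> meg_adj \<omega> t u v} < k"
proof (rule ccontr)
  assume "\<not> card {v. v < n \<and> meg_adj \<omega> t u v} < k"
  then obtain S where S: "S \<subseteq> {v. v < n \<and> meg_adj \<omega> t u v}" "card S = k"
    by (metis (no_types, lifting) not_less obtain_subset_with_card_n)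
  then have "S \<in> {S. S \<subseteq> {..<n} - {u} \<and> card S = k}" by (auto simp: meg_adj_def)
  moreover have "\<forall>v\<in>S. meg_adj \<omega> t u v" using S by auto
  ultimately have "\<omega> \<in> badset n k t u" unfolding badset_def using assms(2) by blast
  then show False using assms(1) by simp
qed

end



lemma pow_fact_le_exp:
  fixes y :: real assumes "0 \<le> y"
  shows "y ^ k / fact k \<le> exp y"
proof -
  have s: "summable (\<lambda>n. y ^ n /\<^sub>R fact n)" using exp_converges[of y] sums_summable by blast
  have "(\<Sum>n\<in>{k}. y ^ n /\<^sub>R fact n) \<le> (\<Sum>n. y ^ n /\<^sub>R fact n)"
    by (rule sum_le_suminf[OF s]) (use assms in auto)
  also have "\<dots> = exp y" using exp_converges[of y] sums_unique by metis
  finally show ?thesis by (simp add: divide_inverse mult.commute)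
qed

lemma binom_bound:
  fixes ph :: real
  assumes ph: "0 \<le> ph" and k: "9 * (real n * ph) \<le> real k"
  shows "real (n choose k) * ph ^ k \<le> exp (- real k)"
proof -
  let ?x = "real n * ph"
  have x0: "0 \<le> ?x" using ph by simp
  have "real (n choose k) * fact k \<le> real n ^ k"
    using binomial_fact_pow[of n k] by (metis of_nat_fact of_nat_le_iff of_nat_mult of_nat_power)
  then have b: "real (n choose k) \<le> real n ^ k / fact k" by (simp add: field_simps)
  have "real (n choose k) * ph ^ k \<le> real n ^ k / fact k * ph ^ k"
    using b ph by (intro mult_right_mono) auto
  also have "\<dots> = (9 * ?x) ^ k / fact k / 9 ^ k" by (simp add: power_mult_distrib field_simps)
  also have "\<dots> \<le> exp (9 * ?x) / 9 ^ k"
    using pow_fact_le_exp[of "9 * ?x" k] x0 by (intro divide_right_mono) auto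
  also have "\<dots> \<le> exp (real k) / 9 ^ k"
    using k by (intro divide_right_mono) auto
  also have "\<dots> \<le> exp (real k) / exp 2 ^ k"
  proof -
    have "exp (2::real) \<le> 9"
    proof -
      have "exp (2::real) = exp 1 * exp 1" by (simp add: exp_add[symmetric])
      also have "\<dots> \<le> 3 * 3" using exp_le by (intro mult_mono) auto
      finally show ?thesis by simp
    qed
    then show ?thesis by (intro divide_left_mono power_mono mult_pos_pos) auto
  qed
  also have "\<dots> = exp (- real k)"
    by (simp add: exp_of_nat_mult[symmetric] exp_minus field_simps exp_add[symmetric])
  finally show ?thesis .
qed




lemma key:
  fixes n :: nat and p q :: real
  assumes ln10: "10 \<le> ln (real n)" and pq: "0 < p" "p < 1" "0 < q" "q < 1"
    and dens: "p / (p + q) \<ge> 1 * ln (real n) / real n"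
  shows "measure (meg_space p q)
       {\<omega> \<in> space (meg_space p q).
          ereal (1 / 2 * ln (real n) / ln (real n * (p / (p + q))))
            \<le> ereal_of_enat (flooding_time n (meg_adj \<omega>))}
     \<ge> 1 - 1 / real n"
proof -
  interpret P: prob_space "meg_space p q" by (rule prob_space_meg)
  define ph where "ph = p / (p + q)"
  define x where "x = real n * ph"
  have ph0: "0 \<le> ph" using pq by (simp add: ph_def)
  have n0: "0 < n" using ln10 by (cases n) auto
  have lnn: "0 < ln (real n)" using ln10 by linarith
  have n1: "1 < real n" using lnn n0 by (simp add: ln_gt_zero_iff)
  have xl: "ln (real n) \<le> x"
    using dens n0 by (simp add: x_def ph_def pos_divide_le_eq mult.commute)
  have x10: "10 \<le> x" using xl ln10 by linarith
  have lnx: "1 \<le> ln x"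
  proof -
    have "exp 1 \<le> x" using exp_le x10 by linarith
    then have "ln (exp 1) \<le> ln x" using x10 by (subst ln_le_cancel_iff) auto
    then show ?thesis by simp
  qed
  define B where "B = 1 / 2 * ln (real n) / ln x"
  have B0: "0 < B" using lnn lnx by (simp add: B_def)
  have Bn: "B \<le> real n"
  proof -
    have "B \<le> 1 / 2 * ln (real n)" using lnx lnn by (simp add: B_def divide_le_eq)
    also have "\<dots> \<le> real n" using ln_le_minus_one[of "real n"] n1 by simp
    finally show ?thesis .
  qed
  define m0 where "m0 = nat \<lceil>B\<rceil> - 1"
  have m0B: "real m0 < B" unfolding m0_def using B0 by linarith
  have m0n: "m0 \<le> n" using m0B Bn by linarith
  define k where "k = nat \<lceil>9 * x\<rceil>"
  have k9: "9 * x \<le> real k" unfolding k_def by linarith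
  have kx2: "real k \<le> x ^ 2"
  proof -
    have "real k \<le> 9 * x + 1" unfolding k_def using x10 by linarith
    also have "\<dots> \<le> x * x"
    proof -
      have "10 * x \<le> x * x" using x10 by (intro mult_right_mono) auto
      then show ?thesis using x10 by linarith
    qed
    finally show ?thesis by (simp add: power2_eq_square)
  qed
  have k1: "1 \<le> k" using k9 x10 by linarith
  have growth: "real k ^ m0 < real n"
  proof -
    have "real k ^ m0 \<le> (x ^ 2) ^ m0" using kx2 by (intro power_mono) auto
    also have "\<dots> = exp (real (2 * m0) * ln x)"
      by (subst exp_of_nat_mult) (use x10 in \<open>simp add: power_mult\<close>)
    also have "\<dots> < exp (ln (real n))"
    proof -
      have "real (2 * m0) * ln x < 2 * B * ln x" using m0B lnx by simp
      also have "\<dots> = ln (real n)" using lnx by (simp add: B_def)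
      finally show ?thesis by simp
    qed
    also have "\<dots> = real n" using n0 by simp
    finally show ?thesis .
  qed
  let ?S = "space (meg_space p q)"
  define T where "T = {\<omega> \<in> ?S. ereal (1 / 2 * ln (real n) / ln (real n * (p / (p + q))))
            \<le> ereal_of_enat (flooding_time n (meg_adj \<omega>))}"
  have Bexp: "1 / 2 * ln (real n) / ln (real n * (p / (p + q))) = B" by (simp add: B_def x_def ph_def)
  have T_eq: "T = {\<omega> \<in> ?S. \<exists>s<n. \<exists>v<n. v \<notin> flood_set n (meg_adj \<omega>) s m0}"
    unfolding T_def Bexp ereal_enat_iff[OF B0] m0_def[symmetric] ft_ge_iff[OF n0] ..
  have T_ev: "T \<in> P.events"
  proof -
    note [measurable] = pred_flood[OF pq]
    have "Measurable.pred (meg_space p q) (\<lambda>\<omega>. \<exists>s<n. \<exists>v<n. v \<notin> flood_set n (meg_adj \<omega>) s m0)"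
      by measurable
    then show ?thesis unfolding T_eq by (rule predE)
  qed
  let ?I = "{..<m0} \<times> {..<n}"
  let ?U = "\<Union>(\<tau>, u)\<in>?I. badset p q n k \<tau> u"
  have sub: "?S - T \<subseteq> ?U"
  proof
    fix \<omega> assume w: "\<omega> \<in> ?S - T"
    show "\<omega> \<in> ?U"
    proof (rule ccontr)
      assume nU: "\<omega> \<notin> ?U"
      have deg: "card {v. v < n \<and> meg_adj \<omega> \<tau> u v} \<le> k - 1" if "\<tau> < m0" "u < n" for \<tau> u
        using not_bad[OF pq, of \<omega> n k \<tau> u] nU w that by fastforce
      have "card (flood_set n (meg_adj \<omega>) 0 m0) \<le> (k - 1 + 1) ^ m0"
        by (rule flood_growth[OF n0 deg])
      then have "card (flood_set n (meg_adj \<omega>) 0 m0) \<le> k ^ m0" using k1 by simp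
      then have "real (card (flood_set n (meg_adj \<omega>) 0 m0)) \<le> real k ^ m0"
        by (simp only: of_nat_power[symmetric] of_nat_le_iff)
      then have "real (card (flood_set n (meg_adj \<omega>) 0 m0)) < real n"
        using growth by linarith
      then have "\<exists>v<n. v \<notin> flood_set n (meg_adj \<omega>) 0 m0"
      proof -
        assume c: "real (card (flood_set n (meg_adj \<omega>) 0 m0)) < real n"
        show ?thesis
        proof (rule ccontr)
          assume "\<not> (\<exists>v<n. v \<notin> flood_set n (meg_adj \<omega>) 0 m0)"
          then have "{..<n} \<subseteq> flood_set n (meg_adj \<omega>) 0 m0" by auto
          then have "card {..<n} \<le> card (flood_set n (meg_adj \<omega>) 0 m0)"
            by (rule card_mono[OF flood_finite])
          then have "n \<le> card (flood_set n (meg_adj \<omega>) 0 m0)" by simp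
          then show False using c by simp
        qed
      qed
      then have "\<omega> \<in> T" using w n0 unfolding T_eq by blast
      then show False using w by simp
    qed
  qed
  have "P.prob (?S - T) \<le> P.prob ?U"
    by (rule P.finite_measure_mono[OF sub]) (auto intro!: sets.finite_UN badset_events[OF pq])
  also have "\<dots> \<le> (\<Sum>(\<tau>, u)\<in>?I. P.prob (badset p q n k \<tau> u))"
  proof -
    have "P.prob (\<Union>i\<in>?I. case i of (\<tau>, u) \<Rightarrow> badset p q n k \<tau> u) \<le> (\<Sum>i\<in>?I. P.prob (case i of (\<tau>, u) \<Rightarrow> badset p q n k \<tau> u))"
      by (rule P.finite_measure_subadditive_finite) (auto intro: badset_events[OF pq])
    then show ?thesis by (simp only: prod.case_distrib)
  qed
  also have "\<dots> \<le> (\<Sum>(\<tau>, u)\<in>?I. exp (- real k))"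
  proof (rule sum_mono)
    fix i assume "i \<in> ?I"
    have "P.prob (badset p q n k (fst i) (snd i)) \<le> real (n choose k) * ph ^ k"
      using badset_prob[OF pq] by (simp add: ph_def)
    also have "\<dots> \<le> exp (- real k)" by (rule binom_bound[OF ph0]) (use k9 in \<open>simp add: x_def\<close>)
    finally show "(case i of (\<tau>, u) \<Rightarrow> P.prob (badset p q n k \<tau> u)) \<le> (case i of (\<tau>, u) \<Rightarrow> exp (- real k))"
      by (simp add: split_def)
  qed
  also have "\<dots> = real m0 * real n * exp (- real k)" by simp
  also have "\<dots> \<le> real n * real n * (1 / real n ^ 3)"
  proof -
    have "exp (- real k) \<le> exp (- (real 3 * ln (real n)))"
      by (subst exp_le_cancel_iff) (use k9 xl lnn in linarith)
    also have "\<dots> = inverse (exp (ln (real n)) ^ 3)"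
      by (simp only: exp_minus exp_of_nat_mult)
    also have "\<dots> = 1 / real n ^ 3"
      using n0 by (simp add: inverse_eq_divide)
    finally have e: "exp (- real k) \<le> 1 / real n ^ 3" .
    show ?thesis using m0n e by (intro mult_mono) auto
  qed
  also have "\<dots> = 1 / real n" using n0 by (simp add: power3_eq_cube)
  finally have bad: "P.prob (?S - T) \<le> 1 / real n" .
  have "P.prob (?S - T) = 1 - P.prob T" by (rule P.prob_compl[OF T_ev])
  then have "P.prob T \<ge> 1 - 1 / real n" using bad by linarith
  then show ?thesis unfolding T_def .
qed



theorem mainTheorem14:
  "\<exists>c > 0. \<exists>C > 0. \<forall>\<^sub>F n in sequentially. \<forall>p q :: real.
     0 < p \<and> p < 1 \<and> 0 < q \<and> q < 1 \<and> p / (p + q) \<ge> c * ln (real n) / real n \<longrightarrow>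
     measure (meg_space p q)
       {\<omega> \<in> space (meg_space p q).
          ereal (C * ln (real n) / ln (real n * (p / (p + q))))
            \<le> ereal_of_enat (flooding_time n (meg_adj \<omega>))}
     \<ge> 1 - 1 / real n"
proof -
  have lim: "filterlim (\<lambda>n. ln (real n)) at_top sequentially"
    by (rule filterlim_compose[OF ln_at_top filterlim_real_sequentially])
  then have ev: "\<forall>\<^sub>F n in sequentially. 10 \<le> ln (real n)" by (simp add: filterlim_at_top)
  have "\<forall>\<^sub>F n in sequentially. \<forall>p q :: real.
     0 < p \<and> p < 1 \<and> 0 < q \<and> q < 1 \<and> p / (p + q) \<ge> 1 * ln (real n) / real n \<longrightarrow>
     measure (meg_space p q)
       {\<omega> \<in> space (meg_space p q).
          ereal (1 / 2 * ln (real n) / ln (real n * (p / (p + q))))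
            \<le> ereal_of_enat (flooding_time n (meg_adj \<omega>))}
     \<ge> 1 - 1 / real n"
    using ev by eventually_elim (use key in blast)
  then show ?thesis by (intro exI[of _ 1] exI[of _ "1/2"] conjI) auto
qed

end
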